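(* Let $(H,k,\chi)$ be an instance of Precoloring Extension with $H=(V,F)$, $V=\{1,\dots,n\}$, $H$ having at least one edge. Construct a $P_n\,|\,\mathrm{conc}\,|\,C_{\max}$ instance as follows: jobs $1,\dots,n$ with $p_j=1$ and conflict graph initially $G=H$; jobs $a,b$ with $p_a=p_b=1$ and jobs $a',b'$ with $p_{a'}=p_{b'}=k-1$, with conflict edges $\{a,a'\},\{b,b'\},\{a,b\}$; for each $j\in V_0$ with $\chi(j)\in\{2,\dots,k-1\}$, jobs $j(1),j(2)$ with $p_{j(1)}=\chi(j)-1$, $p_{j(2)}=k-\chi(j)$ and conflict edges $\{j,j(1)\},\{j,j(2)\},\{j(1),j(2)\},\{a,j\},\{b,j\},\{a,j(2)\},\{b,j(1)\}$; for each $j\in V_0$ with $\chi(j)=1$, a job $j(2)$ with $p_{j(2)}=k-1$ and conflict edges $\{j,j(2)\},\{b,j\},\{a,j(2)\}$; for each $j\in V_0$ with $\chi(j)=k$, a job $j(1)$ with $p_{j(1)}=k-1$ and conflict edges $\{j,j(1)\},\{a,j\},\{b,j(1)\}$. If $(H,k,\chi)$ has a solution $\chi':\{1,\dots,n\}\to\{1,\dots,k\}$, then the constructed instance has a feasible schedule $C$ with $C_{\max}\le k$.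
   Context: Precoloring Extension: given a graph $H=(V,F)$, an integer $k$, and a proper coloring $\chi:V_0\to\{1,\dots,k\}$ of $H[V_0]$ for some $V_0\subseteq V$, a solution is a proper coloring $\chi':V\to\{1,\dots,k\}$ of $H$ with $\chi'(v)=\chi(v)$ for all $v\in V_0$. In $P_n\,|\,\mathrm{conc}\,|\,C_{\max}$, each job $j$ has integer processing time $p_j\ge1$ and release time $0$, and there is a conflict graph $G$; a schedule $C$ assigning each job a completion time $C_j\in\mathbb{N}$ is feasible if $C_j-p_j\ge0$ for all $j$ and $[C_i-p_i,C_i)\cap[C_j-p_j,C_j)=\emptyset$ for all edges $\{i,j\}$ of $G$; $C_{\max}=\max_j C_j$. *)

theory Defs
  imports Main
begin

definition simple_graph_on :: "nat \<Rightarrow> nat set set \<Rightarrow> bool" where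
  "simple_graph_on n F \<longleftrightarrow> (\<forall>e\<in>F. \<exists>u v. e = {u, v} \<and> u \<noteq> v \<and> u \<in> {1..n} \<and> v \<in> {1..n})"

definition pce_instance :: "nat \<Rightarrow> nat set set \<Rightarrow> nat \<Rightarrow> nat set \<Rightarrow> (nat \<Rightarrow> nat) \<Rightarrow> bool" where
  "pce_instance n F k V0 chi \<longleftrightarrow> simple_graph_on n F \<and> V0 \<subseteq> {1..n} \<and>
     (\<forall>v\<in>V0. chi v \<in> {1..k}) \<and>
     (\<forall>u v. {u, v} \<in> F \<longrightarrow> u \<in> V0 \<longrightarrow> v \<in> V0 \<longrightarrow> chi u \<noteq> chi v)"

definition pce_solution :: "nat \<Rightarrow> nat set set \<Rightarrow> nat \<Rightarrow> nat set \<Rightarrow> (nat \<Rightarrow> nat) \<Rightarrow> (nat \<Rightarrow> nat) \<Rightarrow> bool" where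
  "pce_solution n F k V0 chi chi' \<longleftrightarrow>
     (\<forall>v\<in>{1..n}. chi' v \<in> {1..k}) \<and>
     (\<forall>u v. {u, v} \<in> F \<longrightarrow> chi' u \<noteq> chi' v) \<and>
     (\<forall>v\<in>V0. chi' v = chi v)"

datatype job = Orig nat | JA | JB | JA' | JB' | J1 nat | J2 nat

definition mid_col :: "nat \<Rightarrow> nat set \<Rightarrow> (nat \<Rightarrow> nat) \<Rightarrow> nat set" where
  "mid_col k V0 chi = {j\<in>V0. 2 \<le> chi j \<and> chi j \<le> k - 1}"

definition one_col :: "nat set \<Rightarrow> (nat \<Rightarrow> nat) \<Rightarrow> nat set" where
  "one_col V0 chi = {j\<in>V0. chi j = 1}"

definition top_col :: "nat \<Rightarrow> nat set \<Rightarrow> (nat \<Rightarrow> nat) \<Rightarrow> nat set" where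
  "top_col k V0 chi = {j\<in>V0. chi j = k}"

definition red_jobs :: "nat \<Rightarrow> nat \<Rightarrow> nat set \<Rightarrow> (nat \<Rightarrow> nat) \<Rightarrow> job set" where
  "red_jobs n k V0 chi =
     Orig ` {1..n} \<union> {JA, JB, JA', JB'}
     \<union> J1 ` mid_col k V0 chi \<union> J2 ` mid_col k V0 chi
     \<union> J2 ` one_col V0 chi \<union> J1 ` top_col k V0 chi"

definition red_proc :: "nat \<Rightarrow> (nat \<Rightarrow> nat) \<Rightarrow> job \<Rightarrow> nat" where
  "red_proc k chi x = (case x of
      Orig j \<Rightarrow> 1 | JA \<Rightarrow> 1 | JB \<Rightarrow> 1 | JA' \<Rightarrow> k - 1 | JB' \<Rightarrow> k - 1
    | J1 j \<Rightarrow> (if chi j = k then k - 1 else chi j - 1)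
    | J2 j \<Rightarrow> (if chi j = 1 then k - 1 else k - chi j))"

definition red_conf :: "nat set set \<Rightarrow> nat \<Rightarrow> nat set \<Rightarrow> (nat \<Rightarrow> nat) \<Rightarrow> job set set" where
  "red_conf F k V0 chi =
     {{Orig u, Orig v} | u v. {u, v} \<in> F}
     \<union> {{JA, JA'}, {JB, JB'}, {JA, JB}}
     \<union> (\<Union>j\<in>mid_col k V0 chi. {{Orig j, J1 j}, {Orig j, J2 j}, {J1 j, J2 j},
                                 {JA, Orig j}, {JB, Orig j}, {JA, J2 j}, {JB, J1 j}})
     \<union> (\<Union>j\<in>one_col V0 chi. {{Orig j, J2 j}, {JB, Orig j}, {JA, J2 j}})
     \<union> (\<Union>j\<in>top_col k V0 chi. {{Orig j, J1 j}, {JA, Orig j}, {JB, J1 j}})"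

definition feasible_schedule :: "'j set \<Rightarrow> ('j \<Rightarrow> nat) \<Rightarrow> 'j set set \<Rightarrow> ('j \<Rightarrow> nat) \<Rightarrow> bool" where
  "feasible_schedule J p E C \<longleftrightarrow>
     (\<forall>j\<in>J. p j \<le> C j) \<and>
     (\<forall>i j. {i, j} \<in> E \<longrightarrow> {C i - p i..<C i} \<inter> {C j - p j..<C j} = {})"

definition makespan :: "'j set \<Rightarrow> ('j \<Rightarrow> nat) \<Rightarrow> nat" where
  "makespan J C = Max (C ` J)"

end

theory Submission
  imports Defs
begin

lemma ivl_disj: "b \<le> c \<or> d \<le> a \<Longrightarrow> {a..<b} \<inter> {c..<(d::nat)} = {}"
  by auto

theorem lemma9:
  fixes n k :: nat and F :: "nat set set" and V0 :: "nat set" and chi chi' :: "nat \<Rightarrow> nat"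
  assumes "pce_instance n F k V0 chi"
    and "F \<noteq> {}"
    and "pce_solution n F k V0 chi chi'"
  shows "\<exists>C. feasible_schedule (red_jobs n k V0 chi) (red_proc k chi) (red_conf F k V0 chi) C
             \<and> makespan (red_jobs n k V0 chi) C \<le> k"
proof -
  have A1: "\<forall>e\<in>F. \<exists>u v. e = {u, v} \<and> u \<noteq> v \<and> u \<in> {1..n} \<and> v \<in> {1..n}"
    and V0n: "V0 \<subseteq> {1..n}" and chirange: "\<forall>v\<in>V0. chi v \<in> {1..k}"
    using assms(1) unfolding pce_instance_def simple_graph_on_def by blast+
  have S1: "\<forall>v\<in>{1..n}. chi' v \<in> {1..k}" and S2: "\<forall>u v. {u, v} \<in> F \<longrightarrow> chi' u \<noteq> chi' v"
    and S3: "\<forall>v\<in>V0. chi' v = chi v"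
    using assms(3) unfolding pce_solution_def by blast+
  obtain e where "e \<in> F" using assms(2) by blast
  then obtain u v where uv0: "e = {u,v}" "u \<noteq> v" "u \<in> {1..n}" "v \<in> {1..n}" using A1 by meson
  have uvF: "{u,v} \<in> F" using uv0 \<open>e \<in> F\<close> by simp
  have "chi' u \<noteq> chi' v" using S2 uvF by blast
  moreover have "chi' u \<in> {1..k}" "chi' v \<in> {1..k}" using S1 uv0 by blast+
  ultimately have k2: "k \<ge> 2" by auto
  define p where "p = red_proc k chi"
  define C where "C = (\<lambda>x. case x of Orig j \<Rightarrow> min k (chi' j) | JA \<Rightarrow> 1 | JB \<Rightarrow> k
      | JA' \<Rightarrow> k | JB' \<Rightarrow> k - 1 | J1 j \<Rightarrow> (if chi j = k then k - 1 else min k (chi j - 1)) | J2 j \<Rightarrow> k)"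
  define D where "D = (\<lambda>x y. {C x - p x..<C x} \<inter> {C y - p y..<C y} = {})"
  have Dsym: "D x y \<Longrightarrow> D y x" for x y unfolding D_def by auto
  have chiV0: "j \<in> V0 \<Longrightarrow> chi' j = chi j" for j using S3 by blast
  have edges: "D x y" if "{x,y} \<in> red_conf F k V0 chi" for x y
  proof -
    have "(\<exists>u v. {x,y} = {Orig u, Orig v} \<and> {u,v} \<in> F) \<or> {x,y} \<in> {{JA, JA'}, {JB, JB'}, {JA, JB}}
      \<or> (\<exists>j\<in>mid_col k V0 chi. {x,y} \<in> {{Orig j, J1 j}, {Orig j, J2 j}, {J1 j, J2 j},
                                 {JA, Orig j}, {JB, Orig j}, {JA, J2 j}, {JB, J1 j}})
      \<or> (\<exists>j\<in>one_col V0 chi. {x,y} \<in> {{Orig j, J2 j}, {JB, Orig j}, {JA, J2 j}})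
      \<or> (\<exists>j\<in>top_col k V0 chi. {x,y} \<in> {{Orig j, J1 j}, {JA, Orig j}, {JB, J1 j}})"
      using that unfolding red_conf_def Un_iff UN_iff mem_Collect_eq disj_assoc by argo
    then show ?thesis
    proof (elim disjE exE bexE conjE)
      fix u v assume h: "{x, y} = {Orig u, Orig v}" "{u, v} \<in> F"
      obtain a b where ab: "{u,v} = {a,b}" "a \<noteq> b" "a \<in> {1..n}" "b \<in> {1..n}" using A1 h(2) by meson
      have "u \<in> {1..n}" "v \<in> {1..n}" using ab by (auto simp: doubleton_eq_iff)
      moreover have "chi' u \<noteq> chi' v" using S2 h by blast
      moreover have "chi' u \<in> {1..k}" "chi' v \<in> {1..k}" using S1 calculation by blast+
      ultimately have "D (Orig u) (Orig v)" unfolding D_def C_def p_def red_proc_def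
        by (intro ivl_disj) auto
      then show ?thesis using h Dsym by (auto simp: doubleton_eq_iff)
    next
      assume "{x, y} \<in> {{JA, JA'}, {JB, JB'}, {JA, JB}}"
      moreover have "D JA JA'" "D JB JB'" "D JA JB" unfolding D_def C_def p_def red_proc_def
        using k2 by (auto intro!: ivl_disj)
      ultimately show ?thesis using Dsym by (auto simp: doubleton_eq_iff)
    next
      fix j assume j: "j \<in> mid_col k V0 chi" and h: "{x, y} \<in> {{Orig j, J1 j}, {Orig j, J2 j}, {J1 j, J2 j},
                                 {JA, Orig j}, {JB, Orig j}, {JA, J2 j}, {JB, J1 j}}"
      have c: "chi' j = chi j" "2 \<le> chi j" "chi j \<le> k - 1" using j chiV0 unfolding mid_col_def by auto
      have "D (Orig j) (J1 j)" "D (Orig j) (J2 j)" "D (J1 j) (J2 j)" "D JA (Orig j)" "D JB (Orig j)"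
        "D JA (J2 j)" "D JB (J1 j)"
        unfolding D_def C_def p_def red_proc_def using c k2 by (auto intro!: ivl_disj)
      then show ?thesis using h Dsym by (auto simp: doubleton_eq_iff)
    next
      fix j assume j: "j \<in> one_col V0 chi" and h: "{x, y} \<in> {{Orig j, J2 j}, {JB, Orig j}, {JA, J2 j}}"
      have c: "chi' j = 1" "chi j = 1" using j chiV0 unfolding one_col_def by auto
      have "D (Orig j) (J2 j)" "D JB (Orig j)" "D JA (J2 j)"
        unfolding D_def C_def p_def red_proc_def using c k2 by (auto intro!: ivl_disj)
      then show ?thesis using h Dsym by (auto simp: doubleton_eq_iff)
    next
      fix j assume j: "j \<in> top_col k V0 chi" and h: "{x, y} \<in> {{Orig j, J1 j}, {JA, Orig j}, {JB, J1 j}}"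
      have c: "chi' j = k" "chi j = k" using j chiV0 unfolding top_col_def by auto
      have "D (Orig j) (J1 j)" "D JA (Orig j)" "D JB (J1 j)"
        unfolding D_def C_def p_def red_proc_def using c k2 by (auto intro!: ivl_disj)
      then show ?thesis using h Dsym by (auto simp: doubleton_eq_iff)
    qed
  qed
  have fin: "finite (red_jobs n k V0 chi)"
  proof -
    have "finite V0" using V0n finite_subset by blast
    then show ?thesis unfolding red_jobs_def mid_col_def one_col_def top_col_def by auto
  qed
  have pC: "p x \<le> C x" if "x \<in> red_jobs n k V0 chi" for x
  proof -
    have "x \<in> Orig ` {1..n} \<or> x \<in> {JA, JB, JA', JB'} \<or> x \<in> J1 ` mid_col k V0 chi \<or> x \<in> J2 ` mid_col k V0 chi
      \<or> x \<in> J2 ` one_col V0 chi \<or> x \<in> J1 ` top_col k V0 chi" using that unfolding red_jobs_def by blast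
    then show ?thesis
      using S1 k2 chiV0 unfolding p_def C_def red_proc_def mid_col_def one_col_def top_col_def
      by (elim disjE) (auto split: job.splits)
  qed
  have Ck: "C x \<le> k" for x unfolding C_def using k2 by (auto split: job.splits)
  have "makespan (red_jobs n k V0 chi) C \<le> k"
    unfolding makespan_def using fin Ck by (subst Max_le_iff) (auto simp: red_jobs_def)
  moreover have "feasible_schedule (red_jobs n k V0 chi) (red_proc k chi) (red_conf F k V0 chi) C"
    unfolding feasible_schedule_def using pC edges unfolding p_def D_def by blast
  ultimately show ?thesis by blast
qed

end
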